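(* Let $A$ be a quasi-ring, $M$ a right module over $A$ and $N$ a submodule of $M$. Put $[M,N]=\{a\in A : M\cdot a\subset N\}$ and, for $m\in M$, $E_m=\{r\in M : m+r\in N\}$. Define a relation $R$ on $M$ by: $m\,R\,n$ if and only if $(m+N)\cap(n+N)\neq\emptyset$ and $E_{ma}=E_{na}$ for every $a\in[M,N]$. Then $R$ is an equivalence relation on $M$ which is compatible with the addition of $M$ and with the external multiplication by elements of $A$. Consequently the quotient set $M/N:=M/R$ inherits a structure of right $A$-module.
   Context: A semiring is a set with two operations $+,\cdot$ such that $(A,+)$ is a commutative monoid with neutral element $0$, $(A,\cdot)$ is a monoid with unit $1$, multiplication distributes over addition, and $0$ is absorbing. An element $x$ of a commutative monoid $(G,+)$ is quasi-invertible if there is $y$ with $x+y+x=x$ and $y+x+y=y$. A quasi-ring is a semiring whose unit $1$ is quasi-invertible for addition. A right module over a quasi-ring $A$ is a commutative monoid $(M,+)$ with an external law $M\times A\to M$, $(m,a)\mapsto m\cdot a$, satisfying $(m\cdot a)\cdot b=m\cdot(ab)$, $m\cdot(a+b)=m\cdot a+m\cdot b$, $(m+n)\cdot a=m\cdot a+n\cdot a$, $m\cdot 1=m$. A submodule is a subset containing $0$ stable under addition and external multiplication. *)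

theory Defs
  imports Main
begin

text \<open>Semirings: the scalars are a type of class semiring_0 and monoid_mult
 (commutative additive monoid, multiplicative monoid, distributivity, 0 absorbing;
 no requirement that 0 differs from 1 and no commutativity of multiplication).\<close>

definition quasi_invertible :: "'g::comm_monoid_add \<Rightarrow> bool" where
  "quasi_invertible x \<longleftrightarrow> (\<exists>y. x + y + x = x \<and> y + x + y = y)"

definition quasi_ring :: "'a::{semiring_0, monoid_mult} itself \<Rightarrow> bool" where
  "quasi_ring _ \<longleftrightarrow> quasi_invertible (1::'a)"

text \<open>A right module structure on a carrier set S with addition pl, zero z and
 external law sm (relativised so that it can be applied to quotient sets).\<close>
definition right_module_on ::
  "'m set \<Rightarrow> ('m \<Rightarrow> 'm \<Rightarrow> 'm) \<Rightarrow> 'm \<Rightarrow> ('m \<Rightarrow> 'a::{semiring_0, monoid_mult} \<Rightarrow> 'm) \<Rightarrow> bool" where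
  "right_module_on S pl z sm \<longleftrightarrow>
     z \<in> S \<and>
     (\<forall>x\<in>S. \<forall>y\<in>S. pl x y \<in> S) \<and>
     (\<forall>x\<in>S. \<forall>y\<in>S. \<forall>w\<in>S. pl (pl x y) w = pl x (pl y w)) \<and>
     (\<forall>x\<in>S. \<forall>y\<in>S. pl x y = pl y x) \<and>
     (\<forall>x\<in>S. pl z x = x) \<and>
     (\<forall>x\<in>S. \<forall>a. sm x a \<in> S) \<and>
     (\<forall>x\<in>S. \<forall>a b. sm (sm x a) b = sm x (a * b)) \<and>
     (\<forall>x\<in>S. \<forall>a b. sm x (a + b) = pl (sm x a) (sm x b)) \<and>
     (\<forall>x\<in>S. \<forall>y\<in>S. \<forall>a. sm (pl x y) a = pl (sm x a) (sm y a)) \<and>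
     (\<forall>x\<in>S. sm x 1 = x)"

definition right_module :: "('m::comm_monoid_add \<Rightarrow> 'a::{semiring_0, monoid_mult} \<Rightarrow> 'm) \<Rightarrow> bool" where
  "right_module sm \<longleftrightarrow> right_module_on UNIV (+) 0 sm"

definition submodule :: "('m::comm_monoid_add \<Rightarrow> 'a::{semiring_0, monoid_mult} \<Rightarrow> 'm) \<Rightarrow> 'm set \<Rightarrow> bool" where
  "submodule sm N \<longleftrightarrow> 0 \<in> N \<and> (\<forall>x\<in>N. \<forall>y\<in>N. x + y \<in> N) \<and> (\<forall>x\<in>N. \<forall>a. sm x a \<in> N)"

definition colon_ideal :: "('m \<Rightarrow> 'a \<Rightarrow> 'm) \<Rightarrow> 'm set \<Rightarrow> 'a set" where
  "colon_ideal sm N = {a. \<forall>m. sm m a \<in> N}"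

definition E_set :: "'m set \<Rightarrow> 'm::plus \<Rightarrow> 'm set" where
  "E_set N m = {r. m + r \<in> N}"

definition quot_rel :: "('m::plus \<Rightarrow> 'a \<Rightarrow> 'm) \<Rightarrow> 'm set \<Rightarrow> 'm \<Rightarrow> 'm \<Rightarrow> bool" where
  "quot_rel sm N m n \<longleftrightarrow>
     ((\<lambda>x. m + x) ` N \<inter> (\<lambda>x. n + x) ` N \<noteq> {}) \<and>
     (\<forall>a\<in>colon_ideal sm N. E_set N (sm m a) = E_set N (sm n a))"

end

theory Submission
  imports Defs
begin

theorem proposition2p1:
  fixes sm :: "'m::comm_monoid_add \<Rightarrow> 'a::{semiring_0, monoid_mult} \<Rightarrow> 'm"
    and N :: "'m set"
  assumes "quasi_ring TYPE('a)"
    and "right_module sm"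
    and "submodule sm N"
  defines "R \<equiv> {(m, n). quot_rel sm N m n}"
  shows "equiv UNIV R
    \<and> (\<forall>m m' n n'. (m, m') \<in> R \<and> (n, n') \<in> R \<longrightarrow> (m + n, m' + n') \<in> R)
    \<and> (\<forall>m n a. (m, n) \<in> R \<longrightarrow> (sm m a, sm n a) \<in> R)
    \<and> (\<exists>plQ zQ smQ. right_module_on (UNIV // R) plQ zQ smQ
         \<and> zQ = R `` {0}
         \<and> (\<forall>m n. plQ (R `` {m}) (R `` {n}) = R `` {m + n})
         \<and> (\<forall>m a. smQ (R `` {m}) a = R `` {sm m a}))"
proof -
  have smA: "\<And>x a b. sm (sm x a) b = sm x (a * b)"
    and smD1: "\<And>x a b. sm x (a + b) = sm x a + sm x b"
    and smD2: "\<And>x y a. sm (x + y) a = sm x a + sm y a"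
    and sm1: "\<And>x. sm x 1 = x"
    using assms(2) unfolding right_module_def right_module_on_def by auto
  have N0: "0 \<in> N" and Nadd: "\<And>x y. x \<in> N \<Longrightarrow> y \<in> N \<Longrightarrow> x + y \<in> N"
    and Nsm: "\<And>x a. x \<in> N \<Longrightarrow> sm x a \<in> N"
    using assms(3) unfolding submodule_def by auto
  have Rdef: "(m, n) \<in> R \<longleftrightarrow> (\<exists>x\<in>N. \<exists>y\<in>N. m + x = n + y) \<and>
     (\<forall>a\<in>colon_ideal sm N. E_set N (sm m a) = E_set N (sm n a))" for m n
    unfolding R_def quot_rel_def by blast
  have refl: "(m, m) \<in> R" for m
    unfolding Rdef using N0 by blast
  have sym: "(m, n) \<in> R \<Longrightarrow> (n, m) \<in> R" for m n
  proof -
    assume "(m, n) \<in> R"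
    then obtain x y where h: "x \<in> N" "y \<in> N" "m + x = n + y"
      and e: "\<forall>a\<in>colon_ideal sm N. E_set N (sm m a) = E_set N (sm n a)" unfolding Rdef by blast
    have "\<exists>x\<in>N. \<exists>y\<in>N. n + x = m + y" using h(1,2) h(3)[symmetric] by blast
    moreover have "\<forall>a\<in>colon_ideal sm N. E_set N (sm n a) = E_set N (sm m a)" using e by simp
    ultimately show ?thesis unfolding Rdef by blast
  qed
  have trans: "(m, n) \<in> R \<Longrightarrow> (n, p) \<in> R \<Longrightarrow> (m, p) \<in> R" for m n p
  proof -
    assume a1: "(m, n) \<in> R" and a2: "(n, p) \<in> R"
    from a1 obtain x y where x: "x \<in> N" "y \<in> N" "m + x = n + y" unfolding Rdef by blast
    from a2 obtain z w where z: "z \<in> N" "w \<in> N" "n + z = p + w" unfolding Rdef by blast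
    have "m + (x + z) = (m + x) + z" by (simp add: add.assoc)
    also have "\<dots> = (n + z) + y" using x(3) by (simp add: ac_simps)
    also have "\<dots> = p + (w + y)" using z(3) by (simp add: ac_simps)
    finally have "m + (x + z) = p + (w + y)" .
    moreover have "x + z \<in> N" "w + y \<in> N" using x z Nadd by auto
    ultimately show ?thesis using a1 a2 unfolding Rdef by blast
  qed
  have eqv: "equiv UNIV R"
  proof (rule equivI)
    show "refl_on UNIV R" by (rule refl_onI) (auto intro: refl)
    show "R \<subseteq> UNIV \<times> UNIV" by simp
    show "sym R" by (rule symI) (rule sym)
    show "trans R" by (rule transI) (rule trans)
  qed
  have addc: "(m + n, m' + n') \<in> R" if h1: "(m, m') \<in> R" and h2: "(n, n') \<in> R" for m m' n n'
  proof -
    from h1 obtain x y where x: "x \<in> N" "y \<in> N" "m + x = m' + y" unfolding Rdef by blast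
    from h2 obtain z w where z: "z \<in> N" "w \<in> N" "n + z = n' + w" unfolding Rdef by blast
    have "(m + n) + (x + z) = (m + x) + (n + z)" by (simp add: ac_simps)
    also have "\<dots> = (m' + n') + (y + w)" using x(3) z(3) by (simp add: ac_simps)
    finally have "(m + n) + (x + z) = (m' + n') + (y + w)" .
    moreover have "x + z \<in> N" "y + w \<in> N" using x z Nadd by auto
    moreover have "E_set N (sm (m + n) a) = E_set N (sm (m' + n') a)"
      if a: "a \<in> colon_ideal sm N" for a
    proof -
      have e1: "E_set N (sm m a) = E_set N (sm m' a)" using h1 a unfolding Rdef by blast
      have e2: "E_set N (sm n a) = E_set N (sm n' a)" using h2 a unfolding Rdef by blast
      have "r \<in> E_set N (sm (m + n) a) \<longleftrightarrow> r \<in> E_set N (sm (m' + n') a)" for r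
      proof -
        have "r \<in> E_set N (sm (m + n) a) \<longleftrightarrow> sm n a + r \<in> E_set N (sm m a)"
          by (simp add: E_set_def smD2 add.assoc)
        also have "\<dots> \<longleftrightarrow> sm n a + r \<in> E_set N (sm m' a)" using e1 by simp
        also have "\<dots> \<longleftrightarrow> sm m' a + r \<in> E_set N (sm n a)"
          by (simp add: E_set_def add.assoc add.left_commute)
        also have "\<dots> \<longleftrightarrow> sm m' a + r \<in> E_set N (sm n' a)" using e2 by simp
        also have "\<dots> \<longleftrightarrow> r \<in> E_set N (sm (m' + n') a)"
          by (simp add: E_set_def smD2 add.assoc add.left_commute add.commute)
        finally show ?thesis .
      qed
      then show ?thesis by blast
    qed
    ultimately show ?thesis unfolding Rdef by blast
  qed
  have smc: "(sm m a, sm n a) \<in> R" if h: "(m, n) \<in> R" for m n a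
  proof -
    from h obtain x y where x: "x \<in> N" "y \<in> N" "m + x = n + y" unfolding Rdef by blast
    have "sm m a + sm x a = sm n a + sm y a" using x(3) smD2[of m x a] smD2[of n y a] by simp
    moreover have "sm x a \<in> N" "sm y a \<in> N" using x Nsm by auto
    moreover have "E_set N (sm (sm m a) b) = E_set N (sm (sm n a) b)"
      if b: "b \<in> colon_ideal sm N" for b
    proof -
      have "a * b \<in> colon_ideal sm N" using b unfolding colon_ideal_def by (simp add: smA[symmetric])
      then show ?thesis using h unfolding Rdef smA by blast
    qed
    ultimately show ?thesis unfolding Rdef by blast
  qed
  define rep where "rep X = (SOME x. x \<in> X)" for X :: "'m set"
  have rep: "R `` {rep (R `` {m})} = R `` {m}" for m
  proof -
    have "m \<in> R `` {m}" using refl by blast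
    then have "rep (R `` {m}) \<in> R `` {m}" unfolding rep_def by (rule someI)
    then have "(m, rep (R `` {m})) \<in> R" by simp
    from equiv_class_eq[OF eqv this] show ?thesis by simp
  qed
  define plQ where "plQ X Y = R `` {rep X + rep Y}" for X Y
  define smQ where "smQ X a = R `` {sm (rep X) a}" for X a
  have pl: "plQ (R `` {m}) (R `` {n}) = R `` {m + n}" for m n
  proof -
    have "(rep (R `` {m}), m) \<in> R" "(rep (R `` {n}), n) \<in> R"
      using rep[of m] rep[of n] eq_equiv_class_iff[OF eqv] by auto
    then have "(rep (R `` {m}) + rep (R `` {n}), m + n) \<in> R" by (rule addc)
    then show ?thesis unfolding plQ_def using equiv_class_eq[OF eqv] by simp
  qed
  have sq: "smQ (R `` {m}) a = R `` {sm m a}" for m a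
  proof -
    have "(rep (R `` {m}), m) \<in> R"
      using rep[of m] eq_equiv_class_iff[OF eqv] by auto
    then have "(sm (rep (R `` {m})) a, sm m a) \<in> R" by (rule smc)
    then show ?thesis unfolding smQ_def using equiv_class_eq[OF eqv] by simp
  qed
  have Q: "X \<in> UNIV // R \<Longrightarrow> (\<exists>m. X = R `` {m})" for X
    by (auto elim: quotientE)
  have Qi: "R `` {m} \<in> UNIV // R" for m by (rule quotientI) simp
  have mod: "right_module_on (UNIV // R) plQ (R `` {0}) smQ"
    unfolding right_module_on_def
  proof (intro conjI ballI allI)
    show "R `` {0} \<in> UNIV // R" by (rule Qi)
  next
    fix X Y assume "X \<in> UNIV // R" "Y \<in> UNIV // R"
    then obtain m n where "X = R `` {m}" "Y = R `` {n}" using Q by blast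
    then show "plQ X Y \<in> UNIV // R" by (simp add: pl Qi)
  next
    fix X Y W assume "X \<in> UNIV // R" "Y \<in> UNIV // R" "W \<in> UNIV // R"
    then obtain m n p where "X = R `` {m}" "Y = R `` {n}" "W = R `` {p}" using Q by blast
    then show "plQ (plQ X Y) W = plQ X (plQ Y W)" by (simp add: pl add.assoc)
  next
    fix X Y assume "X \<in> UNIV // R" "Y \<in> UNIV // R"
    then obtain m n where "X = R `` {m}" "Y = R `` {n}" using Q by blast
    then show "plQ X Y = plQ Y X" by (simp add: pl add.commute)
  next
    fix X assume "X \<in> UNIV // R"
    then obtain m where "X = R `` {m}" using Q by blast
    then show "plQ (R `` {0}) X = X" by (simp add: pl)
  next
    fix X a assume "X \<in> UNIV // R"
    then obtain m where "X = R `` {m}" using Q by blast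
    then show "smQ X a \<in> UNIV // R" by (simp add: sq Qi)
  next
    fix X a b assume "X \<in> UNIV // R"
    then obtain m where "X = R `` {m}" using Q by blast
    then show "smQ (smQ X a) b = smQ X (a * b)" by (simp add: sq smA)
  next
    fix X a b assume "X \<in> UNIV // R"
    then obtain m where "X = R `` {m}" using Q by blast
    then show "smQ X (a + b) = plQ (smQ X a) (smQ X b)" by (simp add: sq pl smD1)
  next
    fix X Y a assume "X \<in> UNIV // R" "Y \<in> UNIV // R"
    then obtain m n where "X = R `` {m}" "Y = R `` {n}" using Q by blast
    then show "smQ (plQ X Y) a = plQ (smQ X a) (smQ Y a)" by (simp add: sq pl smD2)
  next
    fix X assume "X \<in> UNIV // R"
    then obtain m where "X = R `` {m}" using Q by blast
    then show "smQ X 1 = X" by (simp add: sq sm1)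
  qed
  have ex: "\<exists>plQ zQ smQ. right_module_on (UNIV // R) plQ zQ smQ
         \<and> zQ = R `` {0}
         \<and> (\<forall>m n. plQ (R `` {m}) (R `` {n}) = R `` {m + n})
         \<and> (\<forall>m a. smQ (R `` {m}) a = R `` {sm m a})"
    apply (rule exI[of _ plQ], rule exI[of _ "R `` {0}"], rule exI[of _ smQ])
    using mod pl sq by simp
  have c2: "\<forall>m m' n n'. (m, m') \<in> R \<and> (n, n') \<in> R \<longrightarrow> (m + n, m' + n') \<in> R"
    using addc by blast
  have c3: "\<forall>m n a. (m, n) \<in> R \<longrightarrow> (sm m a, sm n a) \<in> R"
    using smc by blast
  show ?thesis using eqv c2 c3 ex by (intro conjI)
qed

end
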